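(* Let $D$ be a 2-connected rooted digraph with root $r$, and let $l$ be the number of vertices of $D$ of indegree at least 3. Then $\mathrm{maxleaf}(D)\ge\frac{l}{6}$.
   Context: A rooted digraph is a loopless digraph $D$ with a distinguished vertex $r$ (the root) such that: there is no arc $(u,r)$ for any $u\in V(D)$; there is no arc $(x,y)$ with $x\neq r$ and $y$ an outneighbour of $r$; and $r$ has outdegree at least 2. A cut of $D$ is a set $S\subseteq V(D)\setminus\{r\}$ such that some vertex $z\notin S$ is not the endpoint of any directed path starting at $r$ in $D-S$; $D$ is 2-connected if it has no cut of size at most 1. An outbranching of $D$ is a spanning subdigraph which is a directed tree rooted at $r$ with all arcs directed away from $r$; its leaves are the vertices of outdegree 0 in it. $\mathrm{maxleaf}(D)$ denotes the maximum number of leaves of an outbranching of $D$. *)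

theory Defs
  imports Complex_Main
begin

definition out_nbrs :: "('a \<times> 'a) set \<Rightarrow> 'a \<Rightarrow> 'a set" where
  "out_nbrs A x = {y. (x, y) \<in> A}"

definition indegree :: "('a \<times> 'a) set \<Rightarrow> 'a \<Rightarrow> nat" where
  "indegree A v = card {u. (u, v) \<in> A}"

definition rooted_digraph :: "'a set \<Rightarrow> ('a \<times> 'a) set \<Rightarrow> 'a \<Rightarrow> bool" where
  "rooted_digraph V A r \<longleftrightarrow>
     finite V \<and> A \<subseteq> V \<times> V \<and> (\<forall>x. (x, x) \<notin> A) \<and> r \<in> V \<and>
     (\<forall>u. (u, r) \<notin> A) \<and>
     (\<forall>x y. (x, y) \<in> A \<and> x \<noteq> r \<longrightarrow> y \<notin> out_nbrs A r) \<and>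
     card (out_nbrs A r) \<ge> 2"

definition reach_avoiding :: "'a set \<Rightarrow> ('a \<times> 'a) set \<Rightarrow> 'a \<Rightarrow> 'a set \<Rightarrow> 'a set" where
  "reach_avoiding V A r S = {z. (r, z) \<in> (A \<inter> ((V - S) \<times> (V - S)))\<^sup>*}"

definition is_cut :: "'a set \<Rightarrow> ('a \<times> 'a) set \<Rightarrow> 'a \<Rightarrow> 'a set \<Rightarrow> bool" where
  "is_cut V A r S \<longleftrightarrow> S \<subseteq> V - {r} \<and> (\<exists>z \<in> V - S. z \<notin> reach_avoiding V A r S)"

definition two_connected :: "'a set \<Rightarrow> ('a \<times> 'a) set \<Rightarrow> 'a \<Rightarrow> bool" where
  "two_connected V A r \<longleftrightarrow> (\<forall>S. card S \<le> 1 \<longrightarrow> \<not> is_cut V A r S)"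

definition outbranching :: "'a set \<Rightarrow> ('a \<times> 'a) set \<Rightarrow> 'a \<Rightarrow> ('a \<times> 'a) set \<Rightarrow> bool" where
  "outbranching V A r B \<longleftrightarrow>
     B \<subseteq> A \<and> indegree B r = 0 \<and> (\<forall>v \<in> V - {r}. indegree B v = 1) \<and>
     (\<forall>v \<in> V. (r, v) \<in> B\<^sup>*)"

definition leaves :: "'a set \<Rightarrow> ('a \<times> 'a) set \<Rightarrow> 'a set" where
  "leaves V B = {v \<in> V. out_nbrs B v = {}}"

definition maxleaf :: "'a set \<Rightarrow> ('a \<times> 'a) set \<Rightarrow> 'a \<Rightarrow> nat" where
  "maxleaf V A r = Max {card (leaves V B) | B. outbranching V A r B}"

end

theory Submission
  imports Defs
begin


definition Ev :: "'a set \<Rightarrow> ('a \<times> 'a) set \<Rightarrow> 'a set \<Rightarrow> ('a \<times> 'a) set" where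
  "Ev V A Z = A \<inter> ((V - Z) \<times> (V - Z))"

lemma Ev_mono: "Z \<subseteq> Z' \<Longrightarrow> Ev V A Z' \<subseteq> Ev V A Z"
  unfolding Ev_def by auto

lemma Ev_rt_mono: "Z \<subseteq> Z' \<Longrightarrow> (a,b) \<in> (Ev V A Z')\<^sup>* \<Longrightarrow> (a,b) \<in> (Ev V A Z)\<^sup>*"
  using rtrancl_mono[OF Ev_mono] by blast

lemma Ev_rt_end: "(a,b) \<in> (Ev V A Z)\<^sup>* \<Longrightarrow> b = a \<or> b \<in> V - Z"
  by (erule rtranclE) (auto simp: Ev_def)

lemma L1:
  assumes noin: "\<forall>u. (u,s) \<notin> A" and p: "(a,b) \<in> (Ev V A Z)\<^sup>*" and as: "a \<noteq> s"
  shows "(a,b) \<in> (Ev V A (insert s Z))\<^sup>*"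
proof -
  have "(a,b) \<in> (Ev V A (insert s Z))\<^sup>* \<and> b \<noteq> s" using p
  proof (induction rule: rtrancl_induct)
    case base then show ?case using as by simp
  next
    case (step w w')
    then have "w' \<noteq> s" using noin by (auto simp: Ev_def)
    with step have "(w,w') \<in> Ev V A (insert s Z)" by (auto simp: Ev_def)
    with step show ?case using \<open>w' \<noteq> s\<close> by (meson rtrancl.rtrancl_into_rtrancl)
  qed
  then show ?thesis by simp
qed

lemma L2:
  assumes p: "(a,b) \<in> (Ev V A Z)\<^sup>*" and ay: "a \<noteq> y"
  shows "(a,b) \<in> (Ev V A (insert y Z))\<^sup>* \<or> (a,y) \<in> (Ev V A Z)\<^sup>*"
proof -
  have "((a,b) \<in> (Ev V A (insert y Z))\<^sup>* \<and> b \<noteq> y) \<or> (a,y) \<in> (Ev V A Z)\<^sup>*" using p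
  proof (induction rule: rtrancl_induct)
    case base then show ?case using ay by simp
  next
    case (step w w')
    show ?case
    proof (cases "(a,y) \<in> (Ev V A Z)\<^sup>*")
      case True then show ?thesis by simp
    next
      case False
      with step.IH have w: "(a,w) \<in> (Ev V A (insert y Z))\<^sup>*" "w \<noteq> y" by auto
      show ?thesis
      proof (cases "w' = y")
        case True
        have "(a,w) \<in> (Ev V A Z)\<^sup>*" using Ev_rt_mono[of Z "insert y Z"] w by blast
        then have "(a,w') \<in> (Ev V A Z)\<^sup>*" using step.hyps(2) by (meson rtrancl.rtrancl_into_rtrancl)
        then show ?thesis using True by simp
      next
        case False
        then have "(w,w') \<in> Ev V A (insert y Z)" using step.hyps(2) w(2) by (auto simp: Ev_def)
        then show ?thesis using w False by (meson rtrancl.rtrancl_into_rtrancl)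
      qed
    qed
  qed
  then show ?thesis by blast
qed

lemma L3:
  assumes p: "(t,x) \<in> (Ev V A Z)\<^sup>*" and tx: "t \<noteq> x" and ty: "t \<noteq> y" and xy: "x \<noteq> y"
  shows "(t,x) \<in> (Ev V A (insert y Z))\<^sup>* \<or> (t,y) \<in> (Ev V A (insert x Z))\<^sup>*"
proof -
  have "((t,x) \<in> (Ev V A (insert y (insert x Z)))\<^sup>* \<and> x \<noteq> x \<and> x \<noteq> y) \<or> (t,x) \<in> (Ev V A (insert y Z))\<^sup>* \<or> (t,y) \<in> (Ev V A (insert x Z))\<^sup>*"
  proof -
    have "\<And>w. (t,w) \<in> (Ev V A Z)\<^sup>* \<Longrightarrow> ((t,w) \<in> (Ev V A (insert y (insert x Z)))\<^sup>* \<and> w \<noteq> x \<and> w \<noteq> y) \<or> (t,x) \<in> (Ev V A (insert y Z))\<^sup>* \<or> (t,y) \<in> (Ev V A (insert x Z))\<^sup>*"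
    proof -
      fix w assume "(t,w) \<in> (Ev V A Z)\<^sup>*"
      then show "((t,w) \<in> (Ev V A (insert y (insert x Z)))\<^sup>* \<and> w \<noteq> x \<and> w \<noteq> y) \<or> (t,x) \<in> (Ev V A (insert y Z))\<^sup>* \<or> (t,y) \<in> (Ev V A (insert x Z))\<^sup>*"
      proof (induction rule: rtrancl_induct)
        case base then show ?case using tx ty by simp
      next
        case (step w w')
        show ?case
        proof (cases "(t,x) \<in> (Ev V A (insert y Z))\<^sup>* \<or> (t,y) \<in> (Ev V A (insert x Z))\<^sup>*")
          case True then show ?thesis by blast
        next
          case False
          with step.IH have w: "(t,w) \<in> (Ev V A (insert y (insert x Z)))\<^sup>*" "w \<noteq> x" "w \<noteq> y" by auto
          have wa: "(w,w') \<in> A" "w \<in> V - Z" "w' \<in> V - Z" using step.hyps(2) by (auto simp: Ev_def)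
          show ?thesis
          proof (cases "w' = x")
            case True
            have "(t,w) \<in> (Ev V A (insert y Z))\<^sup>*" using Ev_rt_mono[of "insert y Z" "insert y (insert x Z)"] w by blast
            moreover have "(w,w') \<in> Ev V A (insert y Z)" using wa w True xy by (auto simp: Ev_def)
            ultimately show ?thesis using True by (meson rtrancl.rtrancl_into_rtrancl)
          next
            case F1: False
            show ?thesis
            proof (cases "w' = y")
              case True
              have "(t,w) \<in> (Ev V A (insert x Z))\<^sup>*" using Ev_rt_mono[of "insert x Z" "insert y (insert x Z)"] w by blast
              moreover have "(w,w') \<in> Ev V A (insert x Z)" using wa w True xy by (auto simp: Ev_def)
              ultimately show ?thesis using True by (meson rtrancl.rtrancl_into_rtrancl)
            next
              case False
              have "(w,w') \<in> Ev V A (insert y (insert x Z))" using wa w F1 False by (auto simp: Ev_def)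
              then show ?thesis using w F1 False by (meson rtrancl.rtrancl_into_rtrancl)
            qed
          qed
        qed
      qed
    qed
    from this[OF p] show ?thesis by blast
  qed
  then show ?thesis by blast
qed



lemma lowhigh:
  assumes "finite V" "A \<subseteq> V \<times> V" "s \<in> V" "t \<in> V" "s \<noteq> t"
    "\<forall>u. (u,s) \<notin> A" "\<forall>u. (u,t) \<notin> A" "\<forall>v. (v,v) \<notin> A"
    "\<forall>v \<in> V - {s,t}. \<forall>z \<in> V - {v}. \<exists>q \<in> {s,t} - {z}. (q,v) \<in> (Ev V A {z})\<^sup>*"
  shows "\<exists>f::'a \<Rightarrow> nat. inj_on f V \<and> (\<forall>v\<in>V. v \<noteq> s \<longrightarrow> f s < f v) \<and> (\<forall>v\<in>V. v \<noteq> t \<longrightarrow> f v < f t)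
     \<and> (\<forall>v\<in>V-{s,t}. \<exists>u w. (u,v) \<in> A \<and> (w,v) \<in> A \<and> f u < f v \<and> f v < f w)"
  using assms
proof (induction "card V" arbitrary: V A rule: less_induct)
  case less
  note fin = less.prems(1) and AV = less.prems(2) and sV = less.prems(3) and tV = less.prems(4)
    and st = less.prems(5) and nos = less.prems(6) and not = less.prems(7) and nol = less.prems(8)
    and C = less.prems(9)
  show ?case
  proof (cases "V - {s,t} = {}")
    case True
    define f :: "'a \<Rightarrow> nat" where "f = (\<lambda>v. if v = s then 0 else 1)"
    have "inj_on f V" unfolding inj_on_def f_def using True by auto
    moreover have "\<forall>v\<in>V. v \<noteq> s \<longrightarrow> f s < f v" unfolding f_def by auto
    moreover have "\<forall>v\<in>V. v \<noteq> t \<longrightarrow> f v < f t" unfolding f_def using True st by auto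
    ultimately show ?thesis using True by blast
  next
    case False
    then obtain v0 where v0: "v0 \<in> V - {s,t}" by blast
    from C v0 tV have "\<exists>q \<in> {s,t} - {t}. (q,v0) \<in> (Ev V A {t})\<^sup>*" by auto
    then have "(s,v0) \<in> (Ev V A {t})\<^sup>*" using st by auto
    moreover have "s \<noteq> v0" using v0 by auto
    ultimately obtain x0 where x0: "(s,x0) \<in> Ev V A {t}"
      by (metis converse_rtranclE)
    define X where "X = {x \<in> V - {s,t}. (s,x) \<in> A}"
    have x0X: "x0 \<in> X" using x0 nos unfolding X_def Ev_def by auto
    define Dom where "Dom x = {v \<in> V - {s,t,x}. (t,v) \<notin> (Ev V A {s,x})\<^sup>*}" for x
    define x where "x = arg_min (\<lambda>y. card (Dom y)) (\<lambda>y. y \<in> X)"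
    have xX: "x \<in> X" and xmin: "\<forall>y. y \<in> X \<longrightarrow> card (Dom x) \<le> card (Dom y)"
      using arg_min_nat_lemma[of "\<lambda>y. y \<in> X" x0 "\<lambda>y. card (Dom y)"] x0X unfolding x_def by auto
    have xV: "x \<in> V" "x \<noteq> s" "x \<noteq> t" "(s,x) \<in> A" using xX unfolding X_def by auto
    have DomE: "Dom x = {}"
    proof (rule ccontr)
      assume "Dom x \<noteq> {}"
      then obtain v where v: "v \<in> Dom x" by blast
      then have vV: "v \<in> V" "v \<noteq> s" "v \<noteq> t" "v \<noteq> x" and vt: "(t,v) \<notin> (Ev V A {s,x})\<^sup>*"
        unfolding Dom_def by auto
      from C vV xV have "\<exists>q \<in> {s,t} - {x}. (q,v) \<in> (Ev V A {x})\<^sup>*" by auto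
      then obtain q where q: "q \<in> {s,t}" "(q,v) \<in> (Ev V A {x})\<^sup>*" by auto
      show False
      proof (cases "q = t")
        case True
        then have "(t,v) \<in> (Ev V A (insert s {x}))\<^sup>*" using L1[OF nos] q st by auto
        then show False using vt by simp
      next
        case False
        then have qs: "q = s" using q by auto
        with q vV obtain y where y1: "(s,y) \<in> Ev V A {x}" and y2: "(y,v) \<in> (Ev V A {x})\<^sup>*"
          by (metis converse_rtranclE)
        have yprops: "y \<in> V" "y \<noteq> x" "(s,y) \<in> A" "y \<noteq> s" "y \<noteq> t" using y1 nos not unfolding Ev_def by auto
        then have yX: "y \<in> X" unfolding X_def by auto
        have yv: "(y,v) \<in> (Ev V A {s,x})\<^sup>*" using L1[OF nos y2] yprops by simp
        have yDom: "y \<in> Dom x"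
        proof -
          have "(t,y) \<notin> (Ev V A {s,x})\<^sup>*"
          proof
            assume "(t,y) \<in> (Ev V A {s,x})\<^sup>*"
            then have "(t,v) \<in> (Ev V A {s,x})\<^sup>*" using yv by simp
            then show False using vt by simp
          qed
          then show ?thesis unfolding Dom_def using yprops by auto
        qed
        have sub: "Dom y \<subseteq> Dom x"
        proof
          fix w assume w: "w \<in> Dom y"
          then have wV: "w \<in> V" "w \<noteq> s" "w \<noteq> t" "w \<noteq> y" and wt: "(t,w) \<notin> (Ev V A {s,y})\<^sup>*"
            unfolding Dom_def by auto
          have wx: "w \<noteq> x"
          proof
            assume wx: "w = x"
            from C xV sV have "\<exists>q \<in> {s,t} - {s}. (q,x) \<in> (Ev V A {s})\<^sup>*" by auto
            then have "(t,x) \<in> (Ev V A {s})\<^sup>*" using st by auto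
            from L3[OF this] xV yprops have "(t,x) \<in> (Ev V A (insert y {s}))\<^sup>* \<or> (t,y) \<in> (Ev V A (insert x {s}))\<^sup>*"
              by auto
            moreover have "insert y {s} = {s,y}" "insert x {s} = {s,x}" by auto
            ultimately show False using wt wx yDom unfolding Dom_def by auto
          qed
          have "(t,w) \<notin> (Ev V A {s,x})\<^sup>*"
          proof
            assume "(t,w) \<in> (Ev V A {s,x})\<^sup>*"
            from L2[OF this, of y] yprops have "(t,w) \<in> (Ev V A (insert y {s,x}))\<^sup>* \<or> (t,y) \<in> (Ev V A {s,x})\<^sup>*"
              by auto
            then show False
            proof
              assume "(t,w) \<in> (Ev V A (insert y {s,x}))\<^sup>*"
              then have "(t,w) \<in> (Ev V A {s,y})\<^sup>*" using Ev_rt_mono[of "{s,y}" "insert y {s,x}"] by auto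
              then show False using wt by simp
            next
              assume "(t,y) \<in> (Ev V A {s,x})\<^sup>*"
              then show False using yDom unfolding Dom_def by auto
            qed
          qed
          then show "w \<in> Dom x" unfolding Dom_def using wV wx by auto
        qed
        have "y \<notin> Dom y" unfolding Dom_def by auto
        then have "Dom y \<subset> Dom x" using sub yDom by blast
        moreover have "finite (Dom x)" unfolding Dom_def using fin by auto
        ultimately have "card (Dom y) < card (Dom x)" by (simp add: psubset_card_mono)
        then show False using xmin yX by fastforce
      qed
    qed
    define V' where "V' = V - {x}"
    define A' where "A' = (A \<inter> (V' \<times> V')) \<union> {(s,y) | y. (x,y) \<in> A}"
    have xyV': "\<And>y. (x,y) \<in> A \<Longrightarrow> y \<in> V' \<and> y \<noteq> s \<and> y \<noteq> t"
      using AV nol nos not unfolding V'_def by fastforce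
    have A'V: "A' \<subseteq> V' \<times> V'" unfolding A'_def using xyV' sV xV by (auto simp: V'_def)
    have fin': "finite V'" using fin unfolding V'_def by auto
    have card': "card V' < card V" unfolding V'_def using fin xV by (meson card_Diff1_less)
    have sV': "s \<in> V'" and tV': "t \<in> V'" using sV tV xV unfolding V'_def by auto
    have nos': "\<forall>u. (u,s) \<notin> A'" unfolding A'_def using nos xyV' by auto
    have not': "\<forall>u. (u,t) \<notin> A'" unfolding A'_def using not xyV' by auto
    have nol': "\<forall>v. (v,v) \<notin> A'" unfolding A'_def using nol xyV' by auto
    have endV': "\<And>a w Z. (a,w) \<in> (Ev V' A' Z)\<^sup>* \<Longrightarrow> w = a \<or> w \<in> V' - Z"
      using Ev_rt_end by metis
    have C': "\<forall>v \<in> V' - {s,t}. \<forall>z \<in> V' - {v}. \<exists>q \<in> {s,t} - {z}. (q,v) \<in> (Ev V' A' {z})\<^sup>*"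
    proof (intro ballI)
      fix v z assume v: "v \<in> V' - {s,t}" and z: "z \<in> V' - {v}"
      show "\<exists>q \<in> {s,t} - {z}. (q,v) \<in> (Ev V' A' {z})\<^sup>*"
      proof (cases "z = s")
        case True
        have "v \<notin> Dom x" using DomE by simp
        then have "(t,v) \<in> (Ev V A {s,x})\<^sup>*" using v unfolding Dom_def V'_def by auto
        moreover have "Ev V A {s,x} \<subseteq> Ev V' A' {s}" unfolding Ev_def A'_def V'_def by auto
        ultimately have "(t,v) \<in> (Ev V' A' {s})\<^sup>*" using rtrancl_mono by blast
        then show ?thesis using True st by auto
      next
        case False
        have zV: "z \<in> V" "z \<noteq> x" "z \<noteq> v" using z unfolding V'_def by auto
        have vV: "v \<in> V - {s,t}" "v \<noteq> x" using v unfolding V'_def by auto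
        from C vV zV obtain q where q: "q \<in> {s,t} - {z}" "(q,v) \<in> (Ev V A {z})\<^sup>*" by blast
        have qx: "q \<noteq> x" "q \<in> V'" using q xV sV' tV' by auto
        have M: "\<And>w. (q,w) \<in> (Ev V A {z})\<^sup>* \<Longrightarrow> w = x \<or> (q,w) \<in> (Ev V' A' {z})\<^sup>* \<or> (s,w) \<in> (Ev V' A' {z})\<^sup>*"
        proof -
          fix w assume "(q,w) \<in> (Ev V A {z})\<^sup>*"
          then show "w = x \<or> (q,w) \<in> (Ev V' A' {z})\<^sup>* \<or> (s,w) \<in> (Ev V' A' {z})\<^sup>*"
          proof (induction rule: rtrancl_induct)
            case base then show ?case by simp
          next
            case (step w w')
            have ww: "(w,w') \<in> A" "w \<in> V" "w' \<in> V" "w \<noteq> z" "w' \<noteq> z" using step.hyps(2) unfolding Ev_def by auto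
            show ?case
            proof (cases "w' = x")
              case True then show ?thesis by simp
            next
              case w'x: False
              then have w'V': "w' \<in> V'" using ww unfolding V'_def by auto
              consider (a) "w = x" | (b) "(q,w) \<in> (Ev V' A' {z})\<^sup>*" | (c) "(s,w) \<in> (Ev V' A' {z})\<^sup>*"
                using step.IH by blast
              then show ?thesis
              proof cases
                case a
                have "(s,w') \<in> Ev V' A' {z}" using a ww w'V' sV' False unfolding Ev_def A'_def by auto
                then show ?thesis by auto
              next
                case b
                have "w \<noteq> x" using endV'[OF b] qx unfolding V'_def by auto
                then have "(w,w') \<in> Ev V' A' {z}" using ww w'V' unfolding Ev_def A'_def V'_def by auto
                then show ?thesis using b by (meson rtrancl.rtrancl_into_rtrancl)
              next
                case c
                have "w \<noteq> x" using endV'[OF c] xV unfolding V'_def by auto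
                then have "(w,w') \<in> Ev V' A' {z}" using ww w'V' unfolding Ev_def A'_def V'_def by auto
                then show ?thesis using c by (meson rtrancl.rtrancl_into_rtrancl)
              qed
            qed
          qed
        qed
        from M[OF q(2)] vV have "(q,v) \<in> (Ev V' A' {z})\<^sup>* \<or> (s,v) \<in> (Ev V' A' {z})\<^sup>*" by auto
        then show ?thesis using q False by auto
      qed
    qed
    from less.hyps[OF card' fin' A'V sV' tV' st nos' not' nol' C']
    obtain f' :: "'a \<Rightarrow> nat" where f'inj: "inj_on f' V'" and f's: "\<forall>v\<in>V'. v \<noteq> s \<longrightarrow> f' s < f' v"
      and f't: "\<forall>v\<in>V'. v \<noteq> t \<longrightarrow> f' v < f' t"
      and f'lh: "\<forall>v\<in>V'-{s,t}. \<exists>u w. (u,v) \<in> A' \<and> (w,v) \<in> A' \<and> f' u < f' v \<and> f' v < f' w"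
      by blast
    define f where "f v = (if v = s then 0 else if v = x then 1 else f' v + 2)" for v
    have "inj_on f V"
    proof (rule inj_onI)
      fix a b assume ab: "a \<in> V" "b \<in> V" "f a = f b"
      show "a = b"
      proof (cases "a \<in> {s,x} \<or> b \<in> {s,x}")
        case True then show ?thesis using ab unfolding f_def by (auto split: if_splits)
      next
        case False
        then have "f' a = f' b" "a \<in> V'" "b \<in> V'" using ab unfolding f_def V'_def by auto
        then show ?thesis using f'inj by (meson inj_onD)
      qed
    qed
    moreover have "\<forall>v\<in>V. v \<noteq> s \<longrightarrow> f s < f v" unfolding f_def by auto
    moreover have "\<forall>v\<in>V. v \<noteq> t \<longrightarrow> f v < f t"
    proof (intro ballI impI)
      fix v assume v: "v \<in> V" "v \<noteq> t"
      have ft: "f t = f' t + 2" unfolding f_def using st xV by auto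
      show "f v < f t"
      proof (cases "v = s \<or> v = x")
        case True then show ?thesis using ft unfolding f_def by auto
      next
        case False
        then have "v \<in> V'" "f v = f' v + 2" using v unfolding V'_def f_def by auto
        then show ?thesis using f't v ft by auto
      qed
    qed
    moreover have "\<forall>v\<in>V-{s,t}. \<exists>u w. (u,v) \<in> A \<and> (w,v) \<in> A \<and> f u < f v \<and> f v < f w"
    proof (intro ballI)
      fix v assume v: "v \<in> V - {s,t}"
      show "\<exists>u w. (u,v) \<in> A \<and> (w,v) \<in> A \<and> f u < f v \<and> f v < f w"
      proof (cases "v = x")
        case True
        from C xV sV have "\<exists>q \<in> {s,t} - {s}. (q,x) \<in> (Ev V A {s})\<^sup>*" by auto
        then have "(t,x) \<in> (Ev V A {s})\<^sup>*" using st by auto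
        then obtain w where w: "(w,x) \<in> Ev V A {s}" using xV by (metis rtranclE)
        then have w2: "(w,x) \<in> A" "w \<noteq> s" "w \<noteq> x" using nol unfolding Ev_def by auto
        have "f w > 1" using w2 unfolding f_def by auto
        moreover have "f x = 1" "f s = 0" unfolding f_def using xV by auto
        ultimately show ?thesis using True w2 xV by (metis zero_less_one)
      next
        case False
        then have vV': "v \<in> V' - {s,t}" using v unfolding V'_def by auto
        then obtain u' w' where uw: "(u',v) \<in> A'" "(w',v) \<in> A'" "f' u' < f' v" "f' v < f' w'"
          using f'lh by blast
        have fv: "f v = f' v + 2" using v False unfolding f_def by auto
        have w's: "w' \<noteq> s" using uw f's vV' by fastforce
        have w'A: "(w',v) \<in> A" "w' \<in> V'" using uw(2) w's A'V unfolding A'_def by auto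
        have w'x: "w' \<noteq> x" using w'A unfolding V'_def by auto
        have fw: "f v < f w'" using fv uw w's w'x unfolding f_def by auto
        show ?thesis
        proof (cases "u' = s")
          case True
          then have "(s,v) \<in> A \<or> (x,v) \<in> A" using uw(1) unfolding A'_def by auto
          then show ?thesis
          proof
            assume "(s,v) \<in> A"
            moreover have "f s < f v" using fv unfolding f_def by auto
            ultimately show ?thesis using w'A fw by blast
          next
            assume "(x,v) \<in> A"
            moreover have "f x < f v" using fv xV unfolding f_def by auto
            ultimately show ?thesis using w'A fw by blast
          qed
        next
          case us: False
          have u'A: "(u',v) \<in> A" "u' \<in> V'" using uw(1) us A'V unfolding A'_def by auto
          have "u' \<noteq> x" using u'A unfolding V'_def by auto
          then have "f u' < f v" using fv uw us unfolding f_def by auto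
          then show ?thesis using u'A w'A fw by blast
        qed
      qed
    qed
    ultimately show ?thesis by blast
  qed
qed



lemma finite_Img: "finite W \<Longrightarrow> G \<subseteq> W \<times> W \<Longrightarrow> finite (G``{v})"
proof -
  assume "finite W" "G \<subseteq> W \<times> W"
  moreover have "G``{v} \<subseteq> W" using \<open>G \<subseteq> W \<times> W\<close> by auto
  ultimately show ?thesis using finite_subset by blast
qed

lemma caro_wei:
  assumes "finite W" "G \<subseteq> W \<times> W" "sym G" "\<forall>a. (a,a) \<notin> G"
  shows "\<exists>I \<subseteq> W. (\<forall>a b. (a,b) \<in> G \<longrightarrow> \<not>(a \<in> I \<and> b \<in> I)) \<and>
          (\<Sum>v\<in>W. 1 / (real (card (G``{v})) + 1)) \<le> real (card I)"
  using assms
proof (induction "card W" arbitrary: W G rule: less_induct)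
  case less
  note fin = less.prems(1) and GW = less.prems(2) and sy = less.prems(3) and irr = less.prems(4)
  show ?case
  proof (cases "W = {}")
    case True then show ?thesis by auto
  next
    case False
    then obtain x0 where x0: "x0 \<in> W" by blast
    define d where "d v = card (G``{v})" for v
    define x where "x = arg_min d (\<lambda>y. y \<in> W)"
    have xW: "x \<in> W" and xmin: "\<forall>y. y \<in> W \<longrightarrow> d x \<le> d y"
      using arg_min_nat_lemma[of "\<lambda>y. y \<in> W" x0 d] x0 unfolding x_def by auto
    define S where "S = insert x (G``{x})"
    define W' where "W' = W - S"
    define G' where "G' = G \<inter> (W' \<times> W')"
    have SW: "S \<subseteq> W" unfolding S_def using xW GW by auto
    have finS: "finite S" using SW fin finite_subset by auto
    have xnS: "x \<notin> G``{x}" using irr by auto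
    have cardS: "card S = d x + 1" unfolding S_def d_def using xnS finS S_def by auto
    have card': "card W' < card W" unfolding W'_def using xW SW fin S_def
      by (metis Diff_subset insertI1 psubsetI psubset_card_mono subset_Diff_insert)
    have fin': "finite W'" using fin W'_def by auto
    have G'W: "G' \<subseteq> W' \<times> W'" unfolding G'_def by auto
    have sy': "sym G'" using sy unfolding G'_def sym_def by auto
    have irr': "\<forall>a. (a,a) \<notin> G'" using irr unfolding G'_def by auto
    from less.hyps[OF card' fin' G'W sy' irr'] obtain I' where I': "I' \<subseteq> W'"
      "\<forall>a b. (a,b) \<in> G' \<longrightarrow> \<not>(a \<in> I' \<and> b \<in> I')"
      "(\<Sum>v\<in>W'. 1 / (real (card (G'``{v})) + 1)) \<le> real (card I')" by blast
    define I where "I = insert x I'"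
    have xI': "x \<notin> I'" using I'(1) unfolding W'_def S_def by auto
    have finI': "finite I'" using I'(1) fin' finite_subset by blast
    have cardI: "card I = card I' + 1" unfolding I_def using xI' finI' by simp
    have indep: "\<forall>a b. (a,b) \<in> G \<longrightarrow> \<not>(a \<in> I \<and> b \<in> I)"
    proof (intro allI impI notI)
      fix a b assume ab: "(a,b) \<in> G" "a \<in> I \<and> b \<in> I"
      show False
      proof (cases "a = x")
        case True
        then have "b \<noteq> x" using ab irr by auto
        then have "b \<in> I'" using ab unfolding I_def by auto
        moreover have "b \<in> S" using ab True unfolding S_def by auto
        ultimately show False using I'(1) unfolding W'_def by auto
      next
        case ax: False
        then have aI: "a \<in> I'" using ab unfolding I_def by auto
        show False
        proof (cases "b = x")
          case True
          then have "(x,a) \<in> G" using ab sy unfolding sym_def by auto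
          then have "a \<in> S" unfolding S_def by auto
          then show False using aI I'(1) unfolding W'_def by auto
        next
          case False
          then have "b \<in> I'" using ab unfolding I_def by auto
          then have "(a,b) \<in> G'" using aI I'(1) ab unfolding G'_def by auto
          then show False using I'(2) aI \<open>b \<in> I'\<close> by blast
        qed
      qed
    qed
    have sumS: "(\<Sum>v\<in>S. 1 / (real (card (G``{v})) + 1)) \<le> 1"
    proof -
      have "(\<Sum>v\<in>S. 1 / (real (card (G``{v})) + 1)) \<le> (\<Sum>v\<in>S. 1 / (real (d x) + 1))"
      proof (rule sum_mono)
        fix v assume "v \<in> S"
        then have "d x \<le> d v" using xmin SW by auto
        then show "1 / (real (card (G``{v})) + 1) \<le> 1 / (real (d x) + 1)"
          unfolding d_def by (simp add: frac_le)
      qed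
      also have "\<dots> = real (card S) / (real (d x) + 1)" by simp
      also have "\<dots> = 1" using cardS by simp
      finally show ?thesis .
    qed
    have sumW': "(\<Sum>v\<in>W'. 1 / (real (card (G``{v})) + 1)) \<le> (\<Sum>v\<in>W'. 1 / (real (card (G'``{v})) + 1))"
    proof (rule sum_mono)
      fix v assume "v \<in> W'"
      have "G'``{v} \<subseteq> G``{v}" unfolding G'_def by auto
      moreover have "finite (G``{v})" using fin GW by (rule finite_Img)
      ultimately have "card (G'``{v}) \<le> card (G``{v})" by (simp add: card_mono)
      then show "1 / (real (card (G``{v})) + 1) \<le> 1 / (real (card (G'``{v})) + 1)"
        by (simp add: frac_le)
    qed
    have "(\<Sum>v\<in>W. 1 / (real (card (G``{v})) + 1)) = (\<Sum>v\<in>S. 1 / (real (card (G``{v})) + 1)) + (\<Sum>v\<in>W'. 1 / (real (card (G``{v})) + 1))"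
      unfolding W'_def using SW fin by (metis (no_types, lifting) add.commute sum.subset_diff)
    also have "\<dots> \<le> 1 + real (card I')" using sumS sumW' I'(3) by linarith
    also have "\<dots> = real (card I)" using cardI by simp
    finally have "(\<Sum>v\<in>W. 1 / (real (card (G``{v})) + 1)) \<le> real (card I)" .
    moreover have "I \<subseteq> W" unfolding I_def using xW I'(1) W'_def by auto
    ultimately show ?thesis using indep by blast
  qed
qed



lemma tangent: "(x::real) > 0 \<Longrightarrow> 2/3 - x/9 \<le> 1/x"
proof -
  assume x: "x > 0"
  have "9 * x * (1/x - (2/3 - x/9)) = (x-3)^2" using x by (simp add: field_simps power2_eq_square) 
  moreover have "(x-3)^2 \<ge> 0" by simp
  ultimately have "9 * x * (1/x - (2/3 - x/9)) \<ge> 0" by simp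
  then have "1/x - (2/3 - x/9) \<ge> 0" using x by (simp add: zero_le_mult_iff)
  then show ?thesis by simp
qed

lemma sum_card_Image:
  assumes "finite W" "G \<subseteq> W \<times> W"
  shows "(\<Sum>v\<in>W. card (G``{v})) = card G"
proof -
  have e: "G = Sigma W (\<lambda>v. G``{v})" using assms(2) by auto
  have f: "\<And>v. finite (G``{v})"
  proof -
    fix v
    have "G``{v} \<subseteq> W" using assms(2) by auto
    then show "finite (G``{v})" using assms(1) finite_subset by blast
  qed
  have "card (Sigma W (\<lambda>v. G``{v})) = (\<Sum>v\<in>W. card (G``{v}))" using assms(1) f by (simp add: card_SigmaI)
  then show ?thesis using e by simp
qed

lemma indep_third:
  assumes "finite W" "G \<subseteq> W \<times> W" "sym G" "\<forall>a. (a,a) \<notin> G" "card G \<le> 2 * card W"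
  shows "\<exists>I \<subseteq> W. (\<forall>a b. (a,b) \<in> G \<longrightarrow> \<not>(a \<in> I \<and> b \<in> I)) \<and> card W \<le> 3 * card I"
proof -
  obtain I where I: "I \<subseteq> W" "\<forall>a b. (a,b) \<in> G \<longrightarrow> \<not>(a \<in> I \<and> b \<in> I)"
    "(\<Sum>v\<in>W. 1 / (real (card (G``{v})) + 1)) \<le> real (card I)"
    using caro_wei[OF assms(1-4)] by blast
  have "(\<Sum>v\<in>W. 2/3 - (real (card (G``{v})) + 1)/9) \<le> (\<Sum>v\<in>W. 1 / (real (card (G``{v})) + 1))"
    by (rule sum_mono) (rule tangent, simp add: add_pos_nonneg)
  moreover have "(\<Sum>v\<in>W. 2/3 - (real (card (G``{v})) + 1)/9) = 2/3 * real (card W) - (real (card G) + real (card W)) / 9"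
  proof -
    have h: "(\<Sum>v\<in>W. real (card (G``{v}))) = real (card G)"
      using sum_card_Image[OF assms(1,2)] by (metis of_nat_sum)
    have "(\<Sum>v\<in>W. 2/3 - (real (card (G``{v})) + 1)/9) = (\<Sum>v\<in>W. 2/3) - (\<Sum>v\<in>W. (real (card (G``{v})) + 1)/9)" by (rule sum_subtractf)
    also have "(\<Sum>v\<in>W. (real (card (G``{v})) + 1)/9) = (\<Sum>v\<in>W. (real (card (G``{v})) + 1))/9" by (rule sum_divide_distrib[symmetric])
    also have "(\<Sum>v\<in>W. (real (card (G``{v})) + 1)) = real (card G) + real (card W)" using h by (simp add: sum.distrib)
    finally show ?thesis by simp
  qed
  ultimately have "2/3 * real (card W) - (real (card G) + real (card W)) / 9 \<le> real (card I)"
    using I(3) by linarith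
  moreover have "real (card G) \<le> 2 * real (card W)" using assms(5) by simp
  moreover have "(real (card G) + real (card W)) / 9 = real (card G) / 9 + real (card W) / 9"
    by (simp add: add_divide_distrib)
  ultimately have "real (card W) \<le> 3 * real (card I)" by linarith
  then have "card W \<le> 3 * card I" by linarith
  then show ?thesis using I(1,2) by blast
qed



lemma two_elems: "finite S \<Longrightarrow> 2 \<le> card S \<Longrightarrow> \<exists>a b. a \<in> S \<and> b \<in> S \<and> a \<noteq> b"
  using card_le_Suc0_iff_eq[of S] by fastforce

lemma forward:
  fixes h :: "'a \<Rightarrow> nat"
  assumes fin: "finite V" and AV: "A \<subseteq> V \<times> V" and rV: "r \<in> V"
    and early: "\<forall>v\<in>V-{r}. \<exists>u. (u,v) \<in> A \<and> h u < h v"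
    and ry: "\<exists>y\<in>V-{r}. {u. (u,y) \<in> A \<and> h u < h y} = {r}"
  shows "\<exists>B. outbranching V A r B \<and>
     card {v\<in>V-{r}. 2 \<le> card {u. (u,v) \<in> A \<and> h u < h v}} \<le> 3 * card (leaves V B)"
proof -
  define E where "E v = {u. (u,v) \<in> A \<and> h u < h v}" for v
  have EV: "E v \<subseteq> V" for v using AV unfolding E_def by auto
  have finE: "finite (E v)" for v using EV fin finite_subset by blast
  have Ene: "v \<in> V - {r} \<Longrightarrow> E v \<noteq> {}" for v using early unfolding E_def by auto
  define Bs where "Bs = {v\<in>V-{r}. 2 \<le> card (E v)}"
  define Ab where "Ab = {v\<in>V-{r}. card (E v) < 2}"
  define F where "F = (\<Union>y\<in>Ab. E y)"
  have finAb: "finite Ab" and finBs: "finite Bs" using fin unfolding Ab_def Bs_def by auto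
  have cardF: "card F \<le> card Ab"
  proof -
    have "card F \<le> (\<Sum>y\<in>Ab. card (E y))" unfolding F_def by (rule card_UN_le[OF finAb])
    also have "\<dots> \<le> (\<Sum>y\<in>Ab. 1)" by (rule sum_mono) (auto simp: Ab_def)
    finally show ?thesis by simp
  qed
  have FV: "F \<subseteq> V" unfolding F_def using EV by auto
  have rF: "r \<in> F"
  proof -
    obtain y where y: "y \<in> V - {r}" "E y = {r}" using ry unfolding E_def by blast
    then have "y \<in> Ab" unfolding Ab_def by auto
    then show ?thesis unfolding F_def using y by auto
  qed
  define W where "W = V - F"
  have finW: "finite W" using fin unfolding W_def by auto
  have cardV: "card V = 1 + card Ab + card Bs"
  proof -
    have "V = insert r (Ab \<union> Bs)" using rV unfolding Ab_def Bs_def by auto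
    moreover have "r \<notin> Ab \<union> Bs" unfolding Ab_def Bs_def by auto
    moreover have "Ab \<inter> Bs = {}" unfolding Ab_def Bs_def by auto
    ultimately show ?thesis using finAb finBs by (simp add: card_Un_disjoint)
  qed
  have cardW: "card W = card V - card F" unfolding W_def using FV fin by (simp add: card_Diff_subset finite_subset)
  have cardW2: "card Bs + 1 \<le> card W" using cardW cardV cardF by linarith
  define Ys where "Ys = {y\<in>Bs. E y \<subseteq> W}"
  define pa where "pa y = (SOME p. fst p \<in> E y \<and> snd p \<in> E y \<and> fst p \<noteq> snd p)" for y
  have pa: "y \<in> Bs \<Longrightarrow> fst (pa y) \<in> E y \<and> snd (pa y) \<in> E y \<and> fst (pa y) \<noteq> snd (pa y)" for y
  proof -
    assume "y \<in> Bs"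
    then obtain a b where "a \<in> E y" "b \<in> E y" "a \<noteq> b" using two_elems[OF finE] unfolding Bs_def by blast
    then have "\<exists>p. fst p \<in> E y \<and> snd p \<in> E y \<and> fst p \<noteq> snd p" by (intro exI[of _ "(a,b)"]) auto
    then show ?thesis unfolding pa_def by (rule someI_ex)
  qed
  define G where "G = pa ` Ys \<union> prod.swap ` pa ` Ys"
  have GW: "G \<subseteq> W \<times> W"
  proof
    fix p assume "p \<in> G"
    then obtain y where y: "y \<in> Ys" "p = pa y \<or> p = prod.swap (pa y)" unfolding G_def by auto
    then have "fst (pa y) \<in> W" "snd (pa y) \<in> W" using pa[of y] unfolding Ys_def by auto
    then show "p \<in> W \<times> W" using y by (cases "pa y") auto
  qed
  have swG: "prod.swap p \<in> G" if "p \<in> G" for p using that unfolding G_def by auto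
  have symG: "sym G" unfolding sym_def using swG by (metis swap_simp)
  have irrG: "\<forall>a. (a,a) \<notin> G"
  proof (intro allI notI)
    fix a assume "(a,a) \<in> G"
    then obtain y where y: "y \<in> Ys" "(a,a) = pa y \<or> (a,a) = prod.swap (pa y)" unfolding G_def by auto
    then have "fst (pa y) \<noteq> snd (pa y)" using pa unfolding Ys_def by auto
    then show False using y by (cases "pa y") auto
  qed
  have cardG: "card G \<le> 2 * card W"
  proof -
    have "card G \<le> card (pa ` Ys) + card (prod.swap ` pa ` Ys)" unfolding G_def by (rule card_Un_le)
    also have "\<dots> \<le> card Ys + card Ys"
    proof -
      have fY: "finite Ys" using finBs unfolding Ys_def by auto
      have "card (pa ` Ys) \<le> card Ys" using fY by (rule card_image_le)
      moreover have "card (prod.swap ` pa ` Ys) \<le> card (pa ` Ys)" using fY by (simp add: card_image_le)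
      ultimately show ?thesis by linarith
    qed
    also have "card Ys \<le> card Bs" unfolding Ys_def using finBs by (simp add: card_mono)
    finally show ?thesis using cardW2 by linarith
  qed
  obtain I where I: "I \<subseteq> W" "\<forall>a b. (a,b) \<in> G \<longrightarrow> \<not>(a \<in> I \<and> b \<in> I)" "card W \<le> 3 * card I"
    using indep_third[OF finW GW symG irrG cardG] by blast
  have FI: "F \<inter> I = {}" using I(1) unfolding W_def by auto
  define par where "par v = (SOME u. u \<in> E v \<and> u \<notin> I)" for v
  have par: "v \<in> V - {r} \<Longrightarrow> par v \<in> E v \<and> par v \<notin> I" for v
  proof -
    assume v: "v \<in> V - {r}"
    have "\<exists>u. u \<in> E v \<and> u \<notin> I"
    proof (cases "v \<in> Ab")
      case True
      obtain u where "u \<in> E v" using Ene[OF v] by blast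
      then have "u \<in> F" unfolding F_def using True by auto
      then show ?thesis using FI \<open>u \<in> E v\<close> by auto
    next
      case False
      then have vB: "v \<in> Bs" using v unfolding Ab_def Bs_def by auto
      show ?thesis
      proof (cases "E v \<subseteq> W")
        case True
        then have "v \<in> Ys" unfolding Ys_def using vB by auto
        then have "pa v \<in> G" unfolding G_def by auto
        then have "\<not>(fst (pa v) \<in> I \<and> snd (pa v) \<in> I)" using I(2) by (cases "pa v") auto
        then show ?thesis using pa[OF vB] by auto
      next
        case False
        then obtain u where "u \<in> E v" "u \<notin> W" by auto
        then have "u \<notin> I" using I(1) by auto
        then show ?thesis using \<open>u \<in> E v\<close> by auto
      qed
    qed
    then show ?thesis unfolding par_def by (rule someI_ex)
  qed
  define B where "B = {(par v, v) | v. v \<in> V - {r}}"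
  have BA: "B \<subseteq> A" unfolding B_def using par unfolding E_def by auto
  have in_r: "{u. (u,r) \<in> B} = {}" unfolding B_def by auto
  have in_v: "v \<in> V - {r} \<Longrightarrow> {u. (u,v) \<in> B} = {par v}" for v unfolding B_def by auto
  have reach: "v \<in> V \<Longrightarrow> (r,v) \<in> B\<^sup>*" for v
  proof (induction "h v" arbitrary: v rule: less_induct)
    case less
    show ?case
    proof (cases "v = r")
      case True then show ?thesis by simp
    next
      case False
      then have v: "v \<in> V - {r}" using less.prems by auto
      have pv: "(par v, v) \<in> A" "h (par v) < h v" using par[OF v] unfolding E_def by auto
      then have "par v \<in> V" using AV by auto
      then have "(r, par v) \<in> B\<^sup>*" using less.hyps pv by blast
      moreover have "(par v, v) \<in> B" unfolding B_def using v by auto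
      ultimately show ?thesis by simp
    qed
  qed
  have ob: "outbranching V A r B"
    unfolding outbranching_def indegree_def using BA in_r in_v reach by simp
  have IL: "I \<subseteq> leaves V B"
  proof
    fix v assume vI: "v \<in> I"
    have "out_nbrs B v = {}"
    proof (rule ccontr)
      assume "out_nbrs B v \<noteq> {}"
      then obtain y where "(v,y) \<in> B" unfolding out_nbrs_def by auto
      then obtain y' where "y' \<in> V - {r}" "v = par y'" unfolding B_def by auto
      then show False using par vI by auto
    qed
    then show "v \<in> leaves V B" unfolding leaves_def using vI I(1) W_def by auto
  qed
  have "card I \<le> card (leaves V B)" using IL fin by (simp add: card_mono leaves_def)
  then have "card Bs \<le> 3 * card (leaves V B)" using I(3) cardW2 by linarith
  then show ?thesis using ob unfolding Bs_def E_def by blast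
qed



lemma maxleaf_ge:
  assumes "finite V" "outbranching V A r B"
  shows "card (leaves V B) \<le> maxleaf V A r"
proof -
  let ?S = "{card (leaves V B) | B. outbranching V A r B}"
  have "?S \<subseteq> {..card V}"
  proof
    fix n assume "n \<in> ?S"
    then obtain B' where "n = card (leaves V B')" by auto
    moreover have "leaves V B' \<subseteq> V" unfolding leaves_def by auto
    ultimately show "n \<in> {..card V}" using assms(1) by (simp add: card_mono)
  qed
  then have "finite ?S" using finite_subset by blast
  moreover have "card (leaves V B) \<in> ?S" using assms(2) by auto
  ultimately show ?thesis unfolding maxleaf_def by (rule Max_ge)
qed

lemma map_path:
  assumes "(a,b) \<in> (Ev V A Z)\<^sup>*" "\<forall>w. Some w \<in> Z' \<longrightarrow> w \<in> Z"
    "map_prod Some Some ` A \<subseteq> A2" "Some ` V \<subseteq> V2"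
  shows "(Some a, Some b) \<in> (Ev V2 A2 Z')\<^sup>*"
  using assms(1)
proof (induction rule: rtrancl_induct)
  case base then show ?case by simp
next
  case (step w w')
  then have "(Some w, Some w') \<in> Ev V2 A2 Z'" using assms(2-4) unfolding Ev_def by force
  then show ?case using step.IH by (meson rtrancl.rtrancl_into_rtrancl)
qed

lemma lowhigh_rooted:
  assumes rd: "rooted_digraph V A r" and tc: "two_connected V A r"
  shows "\<exists>h::'a \<Rightarrow> nat. inj_on h V \<and> (\<forall>v\<in>V. v \<noteq> r \<longrightarrow> h r < h v) \<and>
     (\<forall>v\<in>V - {r} - out_nbrs A r. \<exists>u w. (u,v) \<in> A \<and> (w,v) \<in> A \<and> h u < h v \<and> h v < h w)"
proof -
  have fin: "finite V" and AV: "A \<subseteq> V \<times> V" and nol: "\<forall>x. (x,x) \<notin> A" and rV: "r \<in> V"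
    and nor: "\<forall>u. (u,r) \<notin> A"
    using rd unfolding rooted_digraph_def by auto
  have NV: "out_nbrs A r \<subseteq> V" using AV unfolding out_nbrs_def by auto
  define V2 where "V2 = insert None (Some ` V)"
  define A2 where "A2 = map_prod Some Some ` A \<union> (\<lambda>y. (None, Some y)) ` out_nbrs A r"
  have reach0: "v \<in> V \<Longrightarrow> (r,v) \<in> (Ev V A {})\<^sup>*" for v
  proof -
    assume v: "v \<in> V"
    have "\<not> is_cut V A r {}" using tc unfolding two_connected_def by auto
    then show ?thesis using v unfolding is_cut_def reach_avoiding_def Ev_def by auto
  qed
  have reach1: "v \<in> V \<Longrightarrow> z \<in> V - {r} \<Longrightarrow> v \<noteq> z \<Longrightarrow> (r,v) \<in> (Ev V A {z})\<^sup>*" for v z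
  proof -
    assume v: "v \<in> V" "z \<in> V - {r}" "v \<noteq> z"
    have "\<not> is_cut V A r {z}" using tc unfolding two_connected_def by auto
    then show ?thesis using v unfolding is_cut_def reach_avoiding_def Ev_def by auto
  qed
  have mapA: "map_prod Some Some ` A \<subseteq> A2" unfolding A2_def by auto
  have mapV: "Some ` V \<subseteq> V2" unfolding V2_def by auto
  have C: "\<forall>v \<in> V2 - {Some r, None}. \<forall>z \<in> V2 - {v}. \<exists>q \<in> {Some r, None} - {z}. (q,v) \<in> (Ev V2 A2 {z})\<^sup>*"
  proof (intro ballI)
    fix v z assume v: "v \<in> V2 - {Some r, None}" and z: "z \<in> V2 - {v}"
    then obtain v0 where v0: "v = Some v0" "v0 \<in> V" "v0 \<noteq> r" unfolding V2_def by auto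
    show "\<exists>q \<in> {Some r, None} - {z}. (q,v) \<in> (Ev V2 A2 {z})\<^sup>*"
    proof (cases z)
      case None
      have "(Some r, Some v0) \<in> (Ev V2 A2 {z})\<^sup>*"
        using map_path[OF reach0[OF v0(2)] _ mapA mapV, of "{z}"] None by auto
      then show ?thesis using None v0 by auto
    next
      case (Some z0)
      show ?thesis
      proof (cases "z0 = r")
        case True
        have "(r,v0) \<in> (Ev V A {})\<^sup>*" using reach0 v0 by auto
        then obtain y where y1: "(r,y) \<in> Ev V A {}" and y2: "(y,v0) \<in> (Ev V A {})\<^sup>*"
          using v0 by (metis converse_rtranclE)
        have yr: "y \<noteq> r" "(r,y) \<in> A" "y \<in> V" using y1 nor unfolding Ev_def by auto
        have "(y,v0) \<in> (Ev V A (insert r {}))\<^sup>*" using L1[OF nor y2 yr(1)] .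
        then have p: "(Some y, Some v0) \<in> (Ev V2 A2 {z})\<^sup>*"
          using map_path[OF _ _ mapA mapV, of y v0 "{r}" "{z}"] Some True by auto
        have "(None, Some y) \<in> Ev V2 A2 {z}" using yr Some True unfolding Ev_def A2_def V2_def out_nbrs_def by auto
        then have "(None, Some v0) \<in> (Ev V2 A2 {z})\<^sup>*" using p by (meson converse_rtrancl_into_rtrancl)
        then show ?thesis using Some v0 by auto
      next
        case False
        have z0: "z0 \<in> V - {r}" "v0 \<noteq> z0" using z Some v0 False unfolding V2_def by auto
        have "(Some r, Some v0) \<in> (Ev V2 A2 {z})\<^sup>*"
          using map_path[OF reach1[OF v0(2) z0(1) z0(2)] _ mapA mapV, of "{z}"] Some by auto
        then show ?thesis using Some False v0(1) by auto
      qed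
    qed
  qed
  have fin2: "finite V2" using fin unfolding V2_def by auto
  have A2V: "A2 \<subseteq> V2 \<times> V2" using AV NV unfolding A2_def V2_def by auto
  have nos2: "\<forall>u. (u, Some r) \<notin> A2" using nor nol unfolding A2_def out_nbrs_def by auto
  have not2: "\<forall>u. (u, None) \<notin> A2" unfolding A2_def by auto
  have nol2: "\<forall>v. (v,v) \<notin> A2" using nol unfolding A2_def by auto
  obtain f :: "'a option \<Rightarrow> nat" where f: "inj_on f V2" "\<forall>v\<in>V2. v \<noteq> Some r \<longrightarrow> f (Some r) < f v"
    "\<forall>v\<in>V2. v \<noteq> None \<longrightarrow> f v < f None"
    "\<forall>v\<in>V2-{Some r, None}. \<exists>u w. (u,v) \<in> A2 \<and> (w,v) \<in> A2 \<and> f u < f v \<and> f v < f w"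
    using lowhigh[OF fin2 A2V _ _ _ nos2 not2 nol2 C] rV unfolding V2_def by blast
  define h where "h v = f (Some v)" for v
  have "inj_on h V"
  proof (rule inj_onI)
    fix a b assume "a \<in> V" "b \<in> V" "h a = h b"
    then have "Some a = Some b" using f(1) unfolding h_def V2_def by (meson inj_onD insertCI rev_image_eqI)
    then show "a = b" by simp
  qed
  moreover have "\<forall>v\<in>V. v \<noteq> r \<longrightarrow> h r < h v" using f(2) unfolding h_def V2_def by auto
  moreover have "\<forall>v\<in>V - {r} - out_nbrs A r. \<exists>u w. (u,v) \<in> A \<and> (w,v) \<in> A \<and> h u < h v \<and> h v < h w"
  proof (intro ballI)
    fix v assume v: "v \<in> V - {r} - out_nbrs A r"
    then have "Some v \<in> V2 - {Some r, None}" unfolding V2_def by auto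
    then obtain u2 w2 where uw: "(u2, Some v) \<in> A2" "(w2, Some v) \<in> A2" "f u2 < f (Some v)" "f (Some v) < f w2"
      using f(4) by blast
    have fvN: "f (Some v) < f None" using f(3) v unfolding V2_def by auto
    have "u2 \<noteq> None"
    proof
      assume "u2 = None"
      then show False using uw(3) fvN by simp
    qed
    then obtain u where u: "u2 = Some u" by auto
    have "w2 \<noteq> None"
    proof
      assume "w2 = None"
      then have "v \<in> out_nbrs A r" using uw(2) unfolding A2_def by auto
      then show False using v by auto
    qed
    then obtain w where w: "w2 = Some w" by auto
    have "(u,v) \<in> A" "(w,v) \<in> A" using uw(1,2) u w unfolding A2_def by auto
    then show "\<exists>u w. (u,v) \<in> A \<and> (w,v) \<in> A \<and> h u < h v \<and> h v < h w"
      using uw(3,4) u w unfolding h_def by blast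
  qed
  ultimately show ?thesis by blast
qed



theorem theorem1:
  fixes V :: "'a set" and A :: "('a \<times> 'a) set" and r :: 'a
  assumes "rooted_digraph V A r"
    and "two_connected V A r"
  shows "real (maxleaf V A r) \<ge> real (card {v \<in> V. indegree A v \<ge> 3}) / 6"
proof -
  note rd = assms(1)
  have fin: "finite V" and AV: "A \<subseteq> V \<times> V" and nol: "\<forall>x. (x,x) \<notin> A" and rV: "r \<in> V"
    and nor: "\<forall>u. (u,r) \<notin> A" and onl: "\<forall>x y. (x,y) \<in> A \<and> x \<noteq> r \<longrightarrow> y \<notin> out_nbrs A r"
    and c2: "card (out_nbrs A r) \<ge> 2"
    using rd unfolding rooted_digraph_def by auto
  obtain h :: "'a \<Rightarrow> nat" where hinj: "inj_on h V" and hr: "\<forall>v\<in>V. v \<noteq> r \<longrightarrow> h r < h v"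
    and hlh: "\<forall>v\<in>V - {r} - out_nbrs A r. \<exists>u w. (u,v) \<in> A \<and> (w,v) \<in> A \<and> h u < h v \<and> h v < h w"
    using lowhigh_rooted[OF assms] by blast
  define N where "N = out_nbrs A r"
  have NV: "N \<subseteq> V" "r \<notin> N" using AV nol unfolding N_def out_nbrs_def by auto
  have Nin: "y \<in> N \<Longrightarrow> {u. (u,y) \<in> A} = {r}" for y using onl unfolding N_def out_nbrs_def by auto
  have "N \<noteq> {}" using c2 unfolding N_def by auto
  then obtain y0 where y0: "y0 \<in> N" by auto
  define M where "M = Max (h ` V)"
  have hM: "v \<in> V \<Longrightarrow> h v \<le> M" for v unfolding M_def using fin by auto
  define h2 where "h2 v = (if v = r then 0 else Suc (M - h v))" for v
  define E1 where "E1 v = {u. (u,v) \<in> A \<and> h u < h v}" for v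
  define E2 where "E2 v = {u. (u,v) \<in> A \<and> h2 u < h2 v}" for v
  have fE: "finite {u. (u,v) \<in> A}" for v
  proof -
    have "{u. (u,v) \<in> A} \<subseteq> V" using AV by auto
    then show ?thesis using fin finite_subset by blast
  qed
  have fE1: "finite (E1 v)" for v using fE[of v] unfolding E1_def by (rule rev_finite_subset) auto
  have fE2: "finite (E2 v)" for v using fE[of v] unfolding E2_def by (rule rev_finite_subset) auto
  have early1: "\<forall>v\<in>V-{r}. \<exists>u. (u,v) \<in> A \<and> h u < h v"
  proof
    fix v assume v: "v \<in> V - {r}"
    show "\<exists>u. (u,v) \<in> A \<and> h u < h v"
    proof (cases "v \<in> N")
      case True then show ?thesis using hr v unfolding N_def out_nbrs_def by auto
    next
      case False then show ?thesis using hlh v unfolding N_def by blast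
    qed
  qed
  have ry1: "\<exists>y\<in>V-{r}. {u. (u,y) \<in> A \<and> h u < h y} = {r}"
  proof -
    have "{u. (u,y0) \<in> A \<and> h u < h y0} = {r}" using Nin[OF y0] hr NV y0 by auto
    then show ?thesis using y0 NV by blast
  qed
  obtain B1 where B1: "outbranching V A r B1" "card {v\<in>V-{r}. 2 \<le> card (E1 v)} \<le> 3 * card (leaves V B1)"
    using forward[OF fin AV rV early1 ry1] unfolding E1_def by blast
  have h2lt: "u \<in> V - {r} \<Longrightarrow> v \<in> V - {r} \<Longrightarrow> h v < h u \<Longrightarrow> h2 u < h2 v" for u v
  proof -
    assume a: "u \<in> V - {r}" "v \<in> V - {r}" "h v < h u"
    then have "h u \<le> M" using hM by auto
    then have "M - h u < M - h v" using a(3) by linarith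
    then show ?thesis using a unfolding h2_def by auto
  qed
  have early2: "\<forall>v\<in>V-{r}. \<exists>u. (u,v) \<in> A \<and> h2 u < h2 v"
  proof
    fix v assume v: "v \<in> V - {r}"
    show "\<exists>u. (u,v) \<in> A \<and> h2 u < h2 v"
    proof (cases "v \<in> N")
      case True then show ?thesis using v unfolding N_def out_nbrs_def h2_def by auto
    next
      case False
      then obtain w where w: "(w,v) \<in> A" "h v < h w" using hlh v unfolding N_def by blast
      have "w \<noteq> r" using w(1) False unfolding N_def out_nbrs_def by auto
      then have "h2 w < h2 v" using h2lt w AV v by auto
      then show ?thesis using w by blast
    qed
  qed
  have ry2: "\<exists>y\<in>V-{r}. {u. (u,y) \<in> A \<and> h2 u < h2 y} = {r}"
  proof -
    have "{u. (u,y0) \<in> A \<and> h2 u < h2 y0} = {r}" using Nin[OF y0] NV y0 unfolding h2_def by auto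
    then show ?thesis using y0 NV by blast
  qed
  obtain B2 where B2: "outbranching V A r B2" "card {v\<in>V-{r}. 2 \<le> card (E2 v)} \<le> 3 * card (leaves V B2)"
    using forward[OF fin AV rV early2 ry2] unfolding E2_def by blast
  let ?L = "{v \<in> V. indegree A v \<ge> 3}"
  have cover: "?L \<subseteq> {v\<in>V-{r}. 2 \<le> card (E1 v)} \<union> {v\<in>V-{r}. 2 \<le> card (E2 v)}"
  proof
    fix v assume vL: "v \<in> ?L"
    then have vV: "v \<in> V" and deg: "3 \<le> card {u. (u,v) \<in> A}" unfolding indegree_def by auto
    have vr: "v \<noteq> r" using deg nor by auto
    have vN: "v \<notin> N"
    proof
      assume "v \<in> N"
      then have "card {u. (u,v) \<in> A} = 1" using Nin by simp
      then show False using deg by simp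
    qed
    define E2' where "E2' = {u. (u,v) \<in> A \<and> h v < h u}"
    have sub: "{u. (u,v) \<in> A} \<subseteq> E1 v \<union> E2'"
    proof
      fix u assume u: "u \<in> {u. (u,v) \<in> A}"
      then have "u \<in> V" "u \<noteq> v" using AV nol by auto
      then have "h u \<noteq> h v" using hinj vV by (meson inj_onD)
      then show "u \<in> E1 v \<union> E2'" using u unfolding E1_def E2'_def by auto
    qed
    have fE2': "finite E2'" using fE[of v] unfolding E2'_def by (rule rev_finite_subset) auto
    have "card {u. (u,v) \<in> A} \<le> card (E1 v \<union> E2')" using sub fE1 fE2' by (simp add: card_mono)
    also have "\<dots> \<le> card (E1 v) + card E2'" by (rule card_Un_le)
    finally have c3: "3 \<le> card (E1 v) + card E2'" using deg by linarith
    have "E2' \<subseteq> E2 v"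
    proof
      fix u assume u: "u \<in> E2'"
      then have "(u,v) \<in> A" "h v < h u" unfolding E2'_def by auto
      moreover have "u \<noteq> r" using vN \<open>(u,v) \<in> A\<close> unfolding N_def out_nbrs_def by auto
      moreover have "u \<in> V" using \<open>(u,v) \<in> A\<close> AV by auto
      ultimately show "u \<in> E2 v" using h2lt vV vr unfolding E2_def by auto
    qed
    then have "card E2' \<le> card (E2 v)" using fE2 by (simp add: card_mono)
    then have "2 \<le> card (E1 v) \<or> 2 \<le> card (E2 v)" using c3 by linarith
    then show "v \<in> {v\<in>V-{r}. 2 \<le> card (E1 v)} \<union> {v\<in>V-{r}. 2 \<le> card (E2 v)}" using vV vr by auto
  qed
  have "card ?L \<le> card ({v\<in>V-{r}. 2 \<le> card (E1 v)} \<union> {v\<in>V-{r}. 2 \<le> card (E2 v)})"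
    using cover fin by (simp add: card_mono)
  also have "\<dots> \<le> card {v\<in>V-{r}. 2 \<le> card (E1 v)} + card {v\<in>V-{r}. 2 \<le> card (E2 v)}"
    by (rule card_Un_le)
  also have "\<dots> \<le> 3 * card (leaves V B1) + 3 * card (leaves V B2)" using B1(2) B2(2) by linarith
  also have "\<dots> \<le> 3 * maxleaf V A r + 3 * maxleaf V A r"
    using maxleaf_ge[OF fin B1(1)] maxleaf_ge[OF fin B2(1)] by linarith
  finally have "card ?L \<le> 6 * maxleaf V A r" by linarith
  then have "real (card ?L) \<le> 6 * real (maxleaf V A r)" by linarith
  then show ?thesis by linarith
qed


end
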